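(* Let $\mathsf P'\subset\mathbb R^m$ be a $(\mu',\epsilon')$-net, $0<\Gamma_0\le1$, $\delta_0\ge0$, and $\delta=\delta_0\mu'\epsilon'$. If some $m$-simplex $\sigma^m\in\mathrm{Del}_{D_{\epsilon'}}(\mathsf P')$ is not $\delta$-protected, then $\mathsf P'$ contains a forbidden configuration (with parameters $\mu',\epsilon',\delta_0,\Gamma_0$). Likewise, if some $m$-simplex $\sigma^m\in\mathrm{Del}_{D_{\epsilon'}}(\mathsf P')$ is not $\Gamma_0$-good, then $\mathsf P'$ contains a forbidden configuration.
   Context: Let $d(x,X)$ denote Euclidean distance from a point to a set; $B(c,r)$ is the open ball. For a finite $\mathsf P\subset\mathbb R^m$ and $\epsilon>0$, $\mathsf P$ is $\epsilon$-dense if $d(x,\mathsf P\cup\partial\,\mathrm{conv}(\mathsf P))<\epsilon$ for every $x\in\mathrm{conv}(\mathsf P)$; it is $\mu\epsilon$-separated if $\|p-q\|\ge\mu\epsilon$ for all distinct $p,q\in\mathsf P$. For $0<\mu\le1$, $\mathsf P$ is a $(\mu,\epsilon)$-net if it is $\epsilon$-dense and $\mu\epsilon$-separated. $D_\epsilon(\mathsf P)=\{x\in\mathrm{conv}(\mathsf P): d(x,\partial\,\mathrm{conv}(\mathsf P))\ge\epsilon\}$. A simplex is a nonempty finite subset $\sigma\subset\mathbb R^m$ (vertices need not be affinely independent); $\dim\sigma=|\sigma|-1$; faces are nonempty subsets. For $p\in\sigma$, $\sigma_p=\sigma\setminus\{p\}$. $L(\sigma)$ is the largest distance between vertices. Altitude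 $D(p,\sigma)=d(p,\mathrm{aff}(\sigma_p))$. Thickness of a $j$-simplex: $\Upsilon(\sigma)=1$ if $j=0$, else $\min_{p}D(p,\sigma)/(jL(\sigma))$. $\sigma$ is $\Gamma_0$-good if every $j$-face $\sigma^j$ satisfies $\Upsilon(\sigma^j)\ge\Gamma_0^j$; $\Gamma_0$-bad otherwise; a $\Gamma_0$-flake is a $\Gamma_0$-bad simplex whose proper faces are all $\Gamma_0$-good. A circumscribing ball of $\sigma$ is an open ball whose boundary contains all vertices of $\sigma$. A Delaunay ball for finite $\mathsf P$ is an open ball $B(x,r)$ containing no point of $\mathsf P$ such that every open ball centred at $x$ containing no point of $\mathsf P$ is contained in $B(x,r)$. $\sigma\subseteq\mathsf P$ is Delaunay if its vertices lie on $\partial B$ for some Delaunay ball $B$. $\mathrm{Del}_{D_\epsilon}(\mathsf P)$ is the set of Delaunay simplices having a Delaunay ball centred in $D_\epsilon(\mathsf P)$. A Delaunay simplex $\sigma$ is $\delta$-protected if it has a Delaunay ball $B$ with $d(q,\partial B)>\delta$ for all $q\in\mathsf P\setminus\sigma$. Forbidden configuration: given a finite $\mathsf P'\subset\mathbb R^m$ and parameters $\mu',\epsilon'>0$, $0<\Gamma_0\le1$, $\delta_0\ge0$, a $(k+1)$-simplex $\tau\subseteq\mathsf P'$ with $k\le m$ is a forbidden configuration if it is a $\Gamma_0$-flake and there exist $p\in\tau$ and a circumscribing ball $B(C,R)$ of $\tau_p$ with $R<\epsilon'$ and $\big|\,\|p-C\|-R\,\big|\le\delta_0\mu'\epsilon'$;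 it is then said to be certified by $p$ and $B(C,R)$. *)

theory Defs
  imports "HOL-Analysis.Analysis"
begin

text \<open>Ambient space R^m is modelled by a Euclidean space type 'a with m = DIM('a).
  Distance from a point to a set is infdist.\<close>

definition eps_dense :: "real \<Rightarrow> 'a::euclidean_space set \<Rightarrow> bool" where
  "eps_dense \<epsilon> P \<longleftrightarrow>
     (\<forall>x \<in> convex hull P. infdist x (P \<union> frontier (convex hull P)) < \<epsilon>)"

definition separated :: "real \<Rightarrow> 'a::euclidean_space set \<Rightarrow> bool" where
  "separated s P \<longleftrightarrow> (\<forall>p\<in>P. \<forall>q\<in>P. p \<noteq> q \<longrightarrow> dist p q \<ge> s)"

definition is_net :: "real \<Rightarrow> real \<Rightarrow> 'a::euclidean_space set \<Rightarrow> bool" where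
  "is_net \<mu> \<epsilon> P \<longleftrightarrow> finite P \<and> \<epsilon> > 0 \<and> 0 < \<mu> \<and> \<mu> \<le> 1 \<and>
      eps_dense \<epsilon> P \<and> separated (\<mu> * \<epsilon>) P"

definition D_eps :: "real \<Rightarrow> 'a::euclidean_space set \<Rightarrow> 'a set" where
  "D_eps \<epsilon> P = {x \<in> convex hull P. infdist x (frontier (convex hull P)) \<ge> \<epsilon>}"

text \<open>Simplices: nonempty finite subsets; dimension = card - 1.\<close>

definition longest_edge :: "'a::euclidean_space set \<Rightarrow> real" where
  "longest_edge \<sigma> = Max ((\<lambda>(p,q). dist p q) ` (\<sigma> \<times> \<sigma>))"

definition altitude :: "'a::euclidean_space \<Rightarrow> 'a set \<Rightarrow> real" where
  "altitude p \<sigma> = infdist p (affine hull (\<sigma> - {p}))"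

definition thickness :: "'a::euclidean_space set \<Rightarrow> real" where
  "thickness \<sigma> = (if card \<sigma> - 1 = 0 then 1
      else Min ((\<lambda>p. altitude p \<sigma>) ` \<sigma>) / (real (card \<sigma> - 1) * longest_edge \<sigma>))"

definition good :: "real \<Rightarrow> 'a::euclidean_space set \<Rightarrow> bool" where
  "good \<Gamma>\<^sub>0 \<sigma> \<longleftrightarrow> (\<forall>\<tau>. \<tau> \<subseteq> \<sigma> \<and> \<tau> \<noteq> {} \<longrightarrow> thickness \<tau> \<ge> \<Gamma>\<^sub>0 ^ (card \<tau> - 1))"

definition flake :: "real \<Rightarrow> 'a::euclidean_space set \<Rightarrow> bool" where
  "flake \<Gamma>\<^sub>0 \<sigma> \<longleftrightarrow> \<not> good \<Gamma>\<^sub>0 \<sigma> \<and> (\<forall>\<tau>. \<tau> \<subset> \<sigma> \<and> \<tau> \<noteq> {} \<longrightarrow> good \<Gamma>\<^sub>0 \<tau>)"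

definition circumscribing_ball :: "'a::euclidean_space set \<Rightarrow> 'a \<Rightarrow> real \<Rightarrow> bool" where
  "circumscribing_ball \<sigma> c r \<longleftrightarrow> \<sigma> \<subseteq> frontier (ball c r)"

definition delaunay_ball :: "'a::euclidean_space set \<Rightarrow> 'a \<Rightarrow> real \<Rightarrow> bool" where
  "delaunay_ball P x r \<longleftrightarrow> ball x r \<inter> P = {} \<and>
      (\<forall>r'. ball x r' \<inter> P = {} \<longrightarrow> ball x r' \<subseteq> ball x r)"

definition delaunay_ball_of :: "'a::euclidean_space set \<Rightarrow> 'a set \<Rightarrow> 'a \<Rightarrow> real \<Rightarrow> bool" where
  "delaunay_ball_of P \<sigma> x r \<longleftrightarrow> delaunay_ball P x r \<and> \<sigma> \<subseteq> frontier (ball x r)"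

definition Del_D :: "real \<Rightarrow> 'a::euclidean_space set \<Rightarrow> 'a set set" where
  "Del_D \<epsilon> P = {\<sigma>. \<sigma> \<subseteq> P \<and> \<sigma> \<noteq> {} \<and>
      (\<exists>x r. delaunay_ball_of P \<sigma> x r \<and> x \<in> D_eps \<epsilon> P)}"

definition protected :: "real \<Rightarrow> 'a::euclidean_space set \<Rightarrow> 'a set \<Rightarrow> bool" where
  "protected \<delta> P \<sigma> \<longleftrightarrow> \<sigma> \<subseteq> P \<and> \<sigma> \<noteq> {} \<and>
      (\<exists>x r. delaunay_ball_of P \<sigma> x r \<and>
         (\<forall>q \<in> P - \<sigma>. infdist q (frontier (ball x r)) > \<delta>))"

definition forbidden_config ::
  "real \<Rightarrow> real \<Rightarrow> real \<Rightarrow> real \<Rightarrow> 'a::euclidean_space set \<Rightarrow> 'a set \<Rightarrow> bool" where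
  "forbidden_config \<mu>' \<epsilon>' \<delta>\<^sub>0 \<Gamma>\<^sub>0 P' \<tau> \<longleftrightarrow>
     \<tau> \<subseteq> P' \<and> finite \<tau> \<and> (\<exists>k. k \<le> DIM('a) \<and> card \<tau> = k + 2) \<and> flake \<Gamma>\<^sub>0 \<tau> \<and>
     (\<exists>p\<in>\<tau>. \<exists>C R. circumscribing_ball (\<tau> - {p}) C R \<and> R < \<epsilon>' \<and>
         \<bar>dist p C - R\<bar> \<le> \<delta>\<^sub>0 * \<mu>' * \<epsilon>')"

end

theory Submission
  imports Defs
begin

lemma good_singleton: "good \<Gamma> {a}"
proof -
  have "\<tau> = {a}" if "\<tau> \<subseteq> {a}" "\<tau> \<noteq> {}" for \<tau> :: "'a set" using that by blast
  moreover have "thickness {a} \<ge> \<Gamma> ^ (card {a} - 1)" by (simp add: thickness_def)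
  ultimately show ?thesis unfolding good_def by metis
qed

lemma flake_exists:
  assumes "finite S" "\<not> good \<Gamma> S"
  shows "\<exists>\<tau>\<subseteq>S. flake \<Gamma> \<tau> \<and> card \<tau> \<ge> 2"
proof -
  have "S \<noteq> {}" using assms(2) unfolding good_def by auto
  define M where "M = (\<lambda>\<tau>. \<tau> \<subseteq> S \<and> \<tau> \<noteq> {} \<and> \<not> good \<Gamma> \<tau>)"
  have "M S" using assms \<open>S \<noteq> {}\<close> by (simp add: M_def)
  then obtain \<tau> where t: "M \<tau>" and mn: "\<And>y. M y \<Longrightarrow> card \<tau> \<le> card y"
    using ex_has_least_nat[of M S card] by blast
  have fin: "finite \<tau>" using t assms(1) M_def finite_subset by blast
  have fl: "flake \<Gamma> \<tau>"
    unfolding flake_def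
  proof (intro conjI allI impI)
    show "\<not> good \<Gamma> \<tau>" using t M_def by blast
    fix \<tau>' assume a: "\<tau>' \<subset> \<tau> \<and> \<tau>' \<noteq> {}"
    show "good \<Gamma> \<tau>'"
    proof (rule ccontr)
      assume "\<not> good \<Gamma> \<tau>'"
      then have "M \<tau>'" using a t M_def by blast
      then have "card \<tau> \<le> card \<tau>'" by (rule mn)
      moreover have "card \<tau>' < card \<tau>" using a fin psubset_card_mono by blast
      ultimately show False by simp
    qed
  qed
  have "card \<tau> \<ge> 2"
  proof (rule ccontr)
    assume "\<not> card \<tau> \<ge> 2"
    moreover have "card \<tau> \<noteq> 0" using fin t M_def by auto
    ultimately have "card \<tau> = 1" by simp
    then obtain a where "\<tau> = {a}" using card_1_singletonE by blast
    then show False using t M_def good_singleton by metis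
  qed
  then show ?thesis using fl t M_def by blast
qed

lemma bad_big:
  fixes S :: "'a::euclidean_space set"
  assumes "finite S" "card S = DIM('a) + 2" "0 < \<Gamma>"
  shows "\<not> good \<Gamma> S"
proof -
  have "affine_dependent S" using affine_dependent_biggerset[of S] assms by simp
  then obtain p where p: "p \<in> S" "p \<in> affine hull (S - {p})"
    unfolding affine_dependent_def by blast
  have "altitude p S = 0" using p unfolding altitude_def by simp
  then have mn: "Min ((\<lambda>p. altitude p S) ` S) \<le> 0"
    using Min_le[of "(\<lambda>p. altitude p S) ` S" 0] assms(1) p(1) by force
  have "dist p p \<in> (\<lambda>(p,q). dist p q) ` (S \<times> S)" using p(1) by force
  then have "0 \<le> longest_edge S" unfolding longest_edge_def
    using Max_ge[of "(\<lambda>(p,q). dist p q) ` (S \<times> S)" "dist p p"] assms(1) by simp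
  then have "0 \<le> real (card S - 1) * longest_edge S" by simp
  then have "thickness S \<le> 0" using mn assms(2)
    unfolding thickness_def by (simp add: divide_nonpos_nonneg)
  moreover have "0 < \<Gamma> ^ (card S - 1)" using assms(3) by simp
  ultimately show ?thesis unfolding good_def using p(1) by force
qed

lemma del_data:
  fixes P :: "'a::euclidean_space set"
  assumes net: "is_net \<mu> \<epsilon> P" and s: "\<sigma> \<in> Del_D \<epsilon> P"
  shows "\<exists>x r. delaunay_ball_of P \<sigma> x r \<and> 0 < r \<and> r < \<epsilon> \<and> \<sigma> \<subseteq> sphere x r
           \<and> (\<forall>q\<in>P. r \<le> dist x q)"
proof -
  obtain x r where db: "delaunay_ball_of P \<sigma> x r" and xd: "x \<in> D_eps \<epsilon> P"
    and sP: "\<sigma> \<subseteq> P" and sne: "\<sigma> \<noteq> {}"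
    using s unfolding Del_D_def by blast
  have rpos: "0 < r"
  proof (rule ccontr)
    assume "\<not> 0 < r"
    then have "ball x r = {}" by simp
    then have "frontier (ball x r) = {}" by (simp only: frontier_empty)
    then show False using db sne unfolding delaunay_ball_of_def by blast
  qed
  have sph: "\<sigma> \<subseteq> sphere x r" using db rpos unfolding delaunay_ball_of_def by simp
  have emp: "ball x r \<inter> P = {}" using db unfolding delaunay_ball_of_def delaunay_ball_def by blast
  have rle: "\<forall>q\<in>P. r \<le> dist x q"
  proof
    fix q assume "q \<in> P"
    then have "q \<notin> ball x r" using emp by blast
    then show "r \<le> dist x q" by simp
  qed
  have Pne: "P \<noteq> {}" using sP sne by blast
  have eps: "\<epsilon> > 0" and dense: "eps_dense \<epsilon> P" using net unfolding is_net_def by auto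
  have xc: "x \<in> convex hull P" and xf: "infdist x (frontier (convex hull P)) \<ge> \<epsilon>"
    using xd unfolding D_eps_def by auto
  have Fne: "frontier (convex hull P) \<noteq> {}"
  proof
    assume "frontier (convex hull P) = {}"
    then have "infdist x (frontier (convex hull P)) = 0" by (simp add: infdist_def)
    then show False using xf eps by simp
  qed
  have "infdist x (P \<union> frontier (convex hull P)) < \<epsilon>"
    using dense xc unfolding eps_dense_def by blast
  then have "min (infdist x P) (infdist x (frontier (convex hull P))) < \<epsilon>"
    using infdist_Un_min[OF Pne Fne] by simp
  then have "infdist x P < \<epsilon>" using xf by linarith
  moreover have "r \<le> infdist x P"
    unfolding infdist_notempty[OF Pne] by (rule cINF_greatest[OF Pne]) (use rle in auto)
  ultimately have "r < \<epsilon>" by linarith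
  then show ?thesis using db rpos sph rle by blast
qed

lemma infdist_sphere_ge:
  fixes q x :: "'a::euclidean_space"
  assumes "0 < r"
  shows "dist q x - r \<le> infdist q (sphere x r)"
proof -
  have ne: "sphere x r \<noteq> {}" using assms by simp
  show ?thesis unfolding infdist_notempty[OF ne]
  proof (rule cINF_greatest[OF ne])
    fix a assume "a \<in> sphere x r"
    then have "dist x a = r" by simp
    then show "dist q x - r \<le> dist q a" using dist_triangle[of q x a] dist_commute[of a x] by linarith
  qed
qed

theorem mainTheorem6:
  fixes P' :: "'a::euclidean_space set"
    and \<mu>' \<epsilon>' \<Gamma>\<^sub>0 \<delta>\<^sub>0 \<delta> :: real
  assumes net: "is_net \<mu>' \<epsilon>' P'"
    and G: "0 < \<Gamma>\<^sub>0" "\<Gamma>\<^sub>0 \<le> 1"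
    and d0: "\<delta>\<^sub>0 \<ge> 0"
    and d: "\<delta> = \<delta>\<^sub>0 * \<mu>' * \<epsilon>'"
  shows "((\<exists>\<sigma> \<in> Del_D \<epsilon>' P'. card \<sigma> = DIM('a) + 1 \<and> \<not> protected \<delta> P' \<sigma>)
            \<longrightarrow> (\<exists>\<tau>. forbidden_config \<mu>' \<epsilon>' \<delta>\<^sub>0 \<Gamma>\<^sub>0 P' \<tau>))
       \<and> ((\<exists>\<sigma> \<in> Del_D \<epsilon>' P'. card \<sigma> = DIM('a) + 1 \<and> \<not> good \<Gamma>\<^sub>0 \<sigma>)
            \<longrightarrow> (\<exists>\<tau>. forbidden_config \<mu>' \<epsilon>' \<delta>\<^sub>0 \<Gamma>\<^sub>0 P' \<tau>))"
proof -
  have finP: "finite P'" and mu: "0 < \<mu>'" and eps: "0 < \<epsilon>'"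
    using net unfolding is_net_def by auto
  have dpos: "0 \<le> \<delta>" using d d0 mu eps by simp
  have key: "\<exists>\<tau>. forbidden_config \<mu>' \<epsilon>' \<delta>\<^sub>0 \<Gamma>\<^sub>0 P' \<tau>"
    if S: "S \<subseteq> P'" "card S \<le> DIM('a) + 2" "\<not> good \<Gamma>\<^sub>0 S"
      and \<sigma>: "\<sigma> \<subseteq> sphere x r" "S - \<sigma> \<subseteq> {q}" "\<bar>dist q x - r\<bar> \<le> \<delta>" "r < \<epsilon>'" and rpos: "0 < r"
    for S \<sigma> x r q
  proof -
    have finS: "finite S" using S finP finite_subset by blast
    obtain \<tau> where t: "\<tau> \<subseteq> S" "flake \<Gamma>\<^sub>0 \<tau>" "card \<tau> \<ge> 2"
      using flake_exists[OF finS S(3)] by blast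
    have fint: "finite \<tau>" using t finS finite_subset by blast
    have ct: "card \<tau> \<le> DIM('a) + 2" using card_mono[OF finS t(1)] S(2) by simp
    have "\<tau> \<noteq> {}" using t(3) by auto
    obtain p where p: "p \<in> \<tau>" "q \<in> \<tau> \<Longrightarrow> p = q"
      using \<open>\<tau> \<noteq> {}\<close> by blast
    have circ: "circumscribing_ball (\<tau> - {p}) x r"
    proof -
      have "\<tau> - {p} \<subseteq> sphere x r" using t(1) \<sigma>(1,2) p by blast
      then show ?thesis unfolding circumscribing_ball_def using rpos by simp
    qed
    have ab: "\<bar>dist p x - r\<bar> \<le> \<delta>\<^sub>0 * \<mu>' * \<epsilon>'"
    proof (cases "p = q")
      case True then show ?thesis using \<sigma>(3) d by simp
    next
      case False
      then have "p \<in> sphere x r" using p(1) t(1) \<sigma>(1,2) by blast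
      then have "dist p x = r" by (simp add: dist_commute)
      then show ?thesis using dpos d by simp
    qed
    have "\<exists>k. k \<le> DIM('a) \<and> card \<tau> = k + 2"
      using ct t(3) by (intro exI[of _ "card \<tau> - 2"]) linarith
    then have "forbidden_config \<mu>' \<epsilon>' \<delta>\<^sub>0 \<Gamma>\<^sub>0 P' \<tau>"
      unfolding forbidden_config_def using t S(1) fint p(1) circ \<sigma>(4) ab by blast
    then show ?thesis by blast
  qed
  show ?thesis
  proof (intro conjI impI)
    assume "\<exists>\<sigma> \<in> Del_D \<epsilon>' P'. card \<sigma> = DIM('a) + 1 \<and> \<not> protected \<delta> P' \<sigma>"
    then obtain \<sigma> where s: "\<sigma> \<in> Del_D \<epsilon>' P'" "card \<sigma> = DIM('a) + 1" "\<not> protected \<delta> P' \<sigma>"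
      by blast
    obtain x r where xr: "delaunay_ball_of P' \<sigma> x r" "0 < r" "r < \<epsilon>'" "\<sigma> \<subseteq> sphere x r"
        "\<forall>q\<in>P'. r \<le> dist x q"
      using del_data[OF net s(1)] by blast
    have sP: "\<sigma> \<subseteq> P'" "\<sigma> \<noteq> {}" using s(1) unfolding Del_D_def by auto
    obtain q where q: "q \<in> P' - \<sigma>" "infdist q (frontier (ball x r)) \<le> \<delta>"
      using s(3) sP xr(1) unfolding protected_def by (meson not_less)
    have "dist q x - r \<le> \<delta>" using q(2) infdist_sphere_ge[of r q x] xr(2) by simp
    moreover have "r \<le> dist q x" using xr(5) q(1) by (simp add: dist_commute)
    ultimately have qa: "\<bar>dist q x - r\<bar> \<le> \<delta>" by simp
    have finS: "finite \<sigma>" using sP finP finite_subset by blast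
    have cS: "card (insert q \<sigma>) = DIM('a) + 2" using q(1) finS s(2) by simp
    show "\<exists>\<tau>. forbidden_config \<mu>' \<epsilon>' \<delta>\<^sub>0 \<Gamma>\<^sub>0 P' \<tau>"
      by (rule key[of "insert q \<sigma>" \<sigma> x r q])
         (use sP q(1) cS bad_big[of "insert q \<sigma>" \<Gamma>\<^sub>0] finS G(1) xr qa in auto)
  next
    assume "\<exists>\<sigma> \<in> Del_D \<epsilon>' P'. card \<sigma> = DIM('a) + 1 \<and> \<not> good \<Gamma>\<^sub>0 \<sigma>"
    then obtain \<sigma> where s: "\<sigma> \<in> Del_D \<epsilon>' P'" "card \<sigma> = DIM('a) + 1" "\<not> good \<Gamma>\<^sub>0 \<sigma>"
      by blast
    obtain x r where xr: "delaunay_ball_of P' \<sigma> x r" "0 < r" "r < \<epsilon>'" "\<sigma> \<subseteq> sphere x r"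
        "\<forall>q\<in>P'. r \<le> dist x q"
      using del_data[OF net s(1)] by blast
    have sP: "\<sigma> \<subseteq> P'" using s(1) unfolding Del_D_def by auto
    show "\<exists>\<tau>. forbidden_config \<mu>' \<epsilon>' \<delta>\<^sub>0 \<Gamma>\<^sub>0 P' \<tau>"
    proof -
      obtain q0 where q0: "q0 \<in> \<sigma>" using s(2) by fastforce
      then have "dist q0 x = r" using xr(4) by (auto simp: dist_commute)
      then show ?thesis
        by (intro key[of \<sigma> \<sigma> x r q0]) (use sP s xr dpos in auto)
    qed
  qed
qed

end
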